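(* Let $\eta_2=\int_1^\infty\frac{\mathrm{d}t}{\sqrt{t^4-1}}$ and let $\mathrm{cleafh}_2:(-\eta_2,\eta_2)\to\mathbb{R}$ be the hyperbolic leaf function of basis $2$. For every real $l$ with $2l\in(-\eta_2,\eta_2)$, writing $C=\mathrm{cleafh}_2(l)$, $$\mathrm{cleafh}_2(2l)=\frac{C^4+2C^2-1}{-C^4+2C^2+1}.$$
   Context: For a natural number $n$, let $\eta_n=\int_1^\infty\frac{\mathrm{d}t}{\sqrt{t^{2n}-1}}$. The hyperbolic leaf function $\mathrm{cleafh}_n$ is the solution $r(l)$ on $(-\eta_n,\eta_n)$ of $\frac{\mathrm{d}^2r}{\mathrm{d}l^2}=n\,r^{2n-1}$ with $r(0)=1$, $r'(0)=0$; it is even, and for $l\ge0$ it is the inverse of $r\mapsto\int_1^r\frac{\mathrm{d}t}{\sqrt{t^{2n}-1}}$, $r\ge1$. *)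

theory Defs
  imports "HOL-Analysis.Analysis"
begin

definition leaf_integrand :: "nat \<Rightarrow> real \<Rightarrow> real" where
  "leaf_integrand n t = 1 / sqrt (t ^ (2 * n) - 1)"

definition eta :: "nat \<Rightarrow> real" where
  "eta n = integral {1..} (leaf_integrand n)"

definition cleafh :: "nat \<Rightarrow> real \<Rightarrow> real" where
  "cleafh n l = (THE r. 1 \<le> r \<and> integral {1..r} (leaf_integrand n) = \<bar>l\<bar>)"

end

theory Submission
  imports Defs
begin

lemma li2: "leaf_integrand 2 t = 1 / sqrt (t ^ 4 - 1)"
  by (simp add: leaf_integrand_def)

lemma li2_pos: "t > 1 \<Longrightarrow> leaf_integrand 2 t > 0"
proof -
  assume "t > 1"
  then have "t ^ 4 > 1" by (simp add: one_less_power)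
  then show ?thesis by (simp add: li2)
qed

lemma li2_nonneg: "t \<ge> 1 \<Longrightarrow> leaf_integrand 2 t \<ge> 0"
proof -
  assume "t \<ge> 1"
  then have "t ^ 4 \<ge> 1" by (simp add: one_le_power)
  then show ?thesis by (simp add: li2)
qed

lemma li2_cont: "a > 1 \<Longrightarrow> continuous_on {a..b} (leaf_integrand 2)"
proof -
  assume a: "a > 1"
  have "\<forall>t\<in>{a..b}. sqrt (t ^ 4 - 1) \<noteq> 0"
  proof
    fix t assume "t \<in> {a..b}"
    then have "t > 1" using a by auto
    then have "t ^ 4 > 1" by (simp add: one_less_power)
    then show "sqrt (t ^ 4 - 1) \<noteq> 0" by simp
  qed
  then show ?thesis unfolding li2[abs_def]
    by (intro continuous_intros) auto
qed

definition Mf :: "real \<Rightarrow> real" where "Mf x = - (x ^ 4) + 2 * x ^ 2 + 1"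
definition phi :: "real \<Rightarrow> real" where
  "phi x = (x ^ 4 + 2 * x ^ 2 - 1) / (- (x ^ 4) + 2 * x ^ 2 + 1)"
definition cc :: real where "cc = sqrt (1 + sqrt 2)"

lemma cc_sq: "cc ^ 2 = 1 + sqrt 2"
  unfolding cc_def by (simp add: add_nonneg_nonneg)

lemma cc_gt1: "cc > 1"
proof -
  have "sqrt 2 > 0" by simp
  then have "1 < 1 + sqrt 2" by simp
  then show ?thesis unfolding cc_def by simp
qed

lemma Mf_cc: "Mf cc = 0"
proof -
  have s2: "sqrt 2 ^ 2 = 2" by simp
  have "cc ^ 4 = (cc ^ 2) ^ 2" by simp
  then have "cc ^ 4 = 3 + 2 * sqrt 2" unfolding cc_sq using s2 by (simp add: power2_eq_square algebra_simps)
  then show ?thesis unfolding Mf_def cc_sq by simp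
qed

lemma Mf_pos: assumes "0 \<le> x" "x < cc" shows "Mf x > 0"
proof -
  have "x ^ 2 < cc ^ 2" using assms by (intro power_strict_mono) auto
  then have a: "x ^ 2 - 1 < sqrt 2" using cc_sq by simp
  have "sqrt 2 > 1" by simp
  moreover have "x ^ 2 \<ge> 0" by simp
  ultimately have "\<bar>x ^ 2 - 1\<bar> < sqrt 2" using a by linarith
  then have "\<bar>x ^ 2 - 1\<bar> ^ 2 < sqrt 2 ^ 2" by (intro power_strict_mono) auto
  then have "(x ^ 2 - 1) ^ 2 < 2" by simp
  then show ?thesis unfolding Mf_def by (simp add: power2_eq_square power4_eq_xxxx algebra_simps)
qed

lemma phi_Mf: "phi x = (x ^ 4 + 2 * x ^ 2 - 1) / Mf x"
  unfolding phi_def Mf_def ..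

lemma phi_ge: assumes "1 \<le> x" "x < cc" shows "phi x \<ge> 1"
proof -
  have M: "Mf x > 0" using Mf_pos assms by simp
  have "x ^ 4 \<ge> 1" using assms by (simp add: one_le_power)
  then have "x ^ 4 + 2 * x ^ 2 - 1 \<ge> Mf x" unfolding Mf_def by simp
  then show ?thesis unfolding phi_Mf using M by simp
qed

lemma phi_gt: assumes "1 < x" "x < cc" shows "phi x > 1"
proof -
  have M: "Mf x > 0" using Mf_pos assms by simp
  have "x ^ 4 > 1" using assms by (simp add: one_less_power)
  then have "x ^ 4 + 2 * x ^ 2 - 1 > Mf x" unfolding Mf_def by simp
  then show ?thesis unfolding phi_Mf using M by simp
qed

lemma phi1: "phi 1 = 1" unfolding phi_def by simp

lemma phi_deriv: assumes "Mf x \<noteq> 0"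
  shows "(phi has_real_derivative (8 * x * (x ^ 4 + 1) / (Mf x) ^ 2)) (at x)"
proof -
  have "((\<lambda>x. (x ^ 4 + 2 * x ^ 2 - 1) / (- (x ^ 4) + 2 * x ^ 2 + 1)) has_real_derivative
     (((4 * x ^ 3 + 2 * (2 * x)) * (- (x ^ 4) + 2 * x ^ 2 + 1) - (x ^ 4 + 2 * x ^ 2 - 1) * (- (4 * x ^ 3) + 2 * (2 * x)))
       / ((- (x ^ 4) + 2 * x ^ 2 + 1) * (- (x ^ 4) + 2 * x ^ 2 + 1)))) (at x)"
    using assms unfolding Mf_def
    by (intro derivative_eq_intros refl) (auto simp: power2_eq_square power3_eq_cube)
  moreover have "(((4 * x ^ 3 + 2 * (2 * x)) * (- (x ^ 4) + 2 * x ^ 2 + 1) - (x ^ 4 + 2 * x ^ 2 - 1) * (- (4 * x ^ 3) + 2 * (2 * x)))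
       / ((- (x ^ 4) + 2 * x ^ 2 + 1) * (- (x ^ 4) + 2 * x ^ 2 + 1))) = 8 * x * (x ^ 4 + 1) / (Mf x) ^ 2"
    unfolding Mf_def power2_eq_square by (simp add: algebra_simps power3_eq_cube power4_eq_xxxx)
  ultimately show ?thesis unfolding phi_def by simp
qed

lemma key: assumes "1 < x" "x < cc"
  shows "leaf_integrand 2 (phi x) * (8 * x * (x ^ 4 + 1) / (Mf x) ^ 2) = 2 * leaf_integrand 2 x"
proof -
  have M: "Mf x > 0" using Mf_pos assms by simp
  define K where "K = 4 * x * (x ^ 4 + 1) / (Mf x) ^ 2"
  have x40: "x ^ 4 + 1 > 0" using assms by (simp add: add_pos_pos)
  have K: "K > 0" unfolding K_def using M assms x40 by (intro divide_pos_pos mult_pos_pos) auto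
  have x4: "x ^ 4 - 1 > 0" using assms by (simp add: one_less_power)
  have "phi x ^ 4 - 1 = K ^ 2 * (x ^ 4 - 1)"
  proof -
    define N where "N = x ^ 4 + 2 * x ^ 2 - 1"
    define Q where "Q = Mf x"
    have Q: "Q \<noteq> 0" using M Q_def by simp
    have e1: "N - Q = 2 * (x ^ 4 - 1)" unfolding N_def Q_def Mf_def by simp
    have e2: "N + Q = 4 * x ^ 2" unfolding N_def Q_def Mf_def by simp
    have e3: "N ^ 2 + Q ^ 2 = 2 * (x ^ 4 + 1) ^ 2" unfolding N_def Q_def Mf_def
      by (simp add: power2_eq_square power4_eq_xxxx algebra_simps)
    have "(N / Q) ^ 4 - 1 = (N - Q) * (N + Q) * (N ^ 2 + Q ^ 2) / Q ^ 4"
      using Q by (simp add: field_simps power2_eq_square power4_eq_xxxx algebra_simps)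
    also have "\<dots> = 16 * x ^ 2 * (x ^ 4 + 1) ^ 2 * (x ^ 4 - 1) / Q ^ 4"
      unfolding e1 e2 e3 by simp
    also have "\<dots> = (4 * x * (x ^ 4 + 1) / Q ^ 2) ^ 2 * (x ^ 4 - 1)"
      using Q by (simp add: field_simps power2_eq_square power4_eq_xxxx)
    finally show ?thesis unfolding phi_Mf K_def N_def Q_def .
  qed
  then have "sqrt (phi x ^ 4 - 1) = K * sqrt (x ^ 4 - 1)"
    using K by (simp add: real_sqrt_mult)
  then have "leaf_integrand 2 (phi x) = 1 / (K * sqrt (x ^ 4 - 1))" by (simp add: li2)
  moreover have "8 * x * (x ^ 4 + 1) / (Mf x) ^ 2 = 2 * K" unfolding K_def by simp
  ultimately show ?thesis using K x4 by (simp add: li2)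
qed

lemma phi_lim: "filterlim phi at_top (at_left cc)"
proof -
  have "((\<lambda>x. x ^ 4 + 2 * x ^ 2 - 1) \<longlongrightarrow> cc ^ 4 + 2 * cc ^ 2 - 1) (at_left cc)"
    by (intro tendsto_intros)
  moreover have "cc ^ 4 + 2 * cc ^ 2 - 1 > 0"
  proof -
    have "cc ^ 4 \<ge> 1" "cc ^ 2 \<ge> 1" using cc_gt1 by (simp_all add: one_le_power)
    then show ?thesis by simp
  qed
  moreover have "(Mf \<longlongrightarrow> Mf cc) (at_left cc)"
    unfolding Mf_def by (intro tendsto_intros)
  moreover have "\<forall>\<^sub>F x in at_left cc. 0 < Mf x"
    by (rule eventually_at_leftI[of 0]) (auto intro: Mf_pos simp: cc_gt1 less_trans[OF zero_less_one cc_gt1])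
  ultimately have "filterlim (\<lambda>x. (x ^ 4 + 2 * x ^ 2 - 1) / Mf x) at_top (at_left cc)"
    using Mf_cc by (intro LIM_at_top_divide) auto
  then show ?thesis unfolding phi_Mf[abs_def] .
qed

locale LI =
  assumes int: "leaf_integrand 2 integrable_on {1..}"
begin

definition F :: "real \<Rightarrow> real" where "F r = integral {1..r} (leaf_integrand 2)"

lemma int_sub: "leaf_integrand 2 integrable_on {a..b}" if "a \<ge> 1"
  using integrable_on_subinterval[OF int] that by auto

lemma F_cont: "continuous_on {1..b} F"
  unfolding F_def by (rule indefinite_integral_continuous_1[OF int_sub]) simp

lemma F_deriv: "r > 1 \<Longrightarrow> (F has_real_derivative leaf_integrand 2 r) (at r)"
proof -
  assume r: "r > 1"
  define a where "a = (1 + r) / 2"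
  define b where "b = r + 1"
  have ab: "1 < a" "a < r" "r < b" using r by (auto simp: a_def b_def)
  have "((\<lambda>x. integral {a..x} (leaf_integrand 2)) has_real_derivative leaf_integrand 2 r) (at r within {a..b})"
    using integral_has_real_derivative[OF li2_cont[OF ab(1), of b], of r] ab by simp
  then have "((\<lambda>x. integral {a..x} (leaf_integrand 2)) has_real_derivative leaf_integrand 2 r) (at r)"
    using ab at_within_interior[of r "{a..b}"] interior_atLeastAtMost_real[of a b] by simp
  note dd = this
  have d: "((\<lambda>x. F a + integral {a..x} (leaf_integrand 2)) has_real_derivative leaf_integrand 2 r) (at r)"
    using DERIV_add[OF DERIV_const[of "F a"] dd] by simp
  show ?thesis
  proof (rule has_field_derivative_transform_within_open[OF d, of "{a<..}"])
    fix x assume x: "x \<in> {a<..}"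
    have "a \<le> x" using x by simp
    have "integral {1..a} (leaf_integrand 2) + integral {a..x} (leaf_integrand 2) = integral {1..x} (leaf_integrand 2)"
      by (rule Henstock_Kurzweil_Integration.integral_combine[OF _ \<open>a \<le> x\<close> int_sub[OF order_refl]]) (use ab in simp)
    then show "F a + integral {a..x} (leaf_integrand 2) = F x"
      unfolding F_def .
  next
    show "open {a<..}" by simp
    show "r \<in> {a<..}" using ab by simp
  qed
qed

lemma F_mono: "1 \<le> r \<Longrightarrow> r < s \<Longrightarrow> F r < F s"
proof -
  assume rs: "1 \<le> r" "r < s"
  show ?thesis
  proof (rule DERIV_pos_imp_increasing_open[OF rs(2)])
    fix x assume "r < x" "x < s"
    then have "x > 1" using rs by auto
    then show "\<exists>y. DERIV F x :> y \<and> 0 < y"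
      using F_deriv li2_pos by blast
  next
    show "continuous_on {r..s} F"
      by (rule continuous_on_subset[OF F_cont[of s]]) (use rs in auto)
  qed
qed

lemma F1: "F 1 = 0" by (simp add: F_def)

lemma F_lim: "(F \<longlongrightarrow> eta 2) at_top"
proof -
  have ai: "leaf_integrand 2 absolutely_integrable_on {1..}"
    by (rule nonnegative_absolutely_integrable_1[OF int]) (auto intro: li2_nonneg)
  have L1: "((\<lambda>b. set_lebesgue_integral lebesgue {1..b} (leaf_integrand 2)) \<longlongrightarrow>
        set_lebesgue_integral lebesgue {1..} (leaf_integrand 2)) at_top"
    by (rule tendsto_set_lebesgue_integral_at_top[OF _ ai]) auto
  have L2: "set_lebesgue_integral lebesgue {1..} (leaf_integrand 2) = eta 2"
    using set_lebesgue_integral_eq_integral(2)[OF ai] by (simp add: eta_def)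
  have E: "\<forall>\<^sub>F b in at_top. set_lebesgue_integral lebesgue {1..b} (leaf_integrand 2) = F b"
  proof (rule eventually_mono[OF eventually_ge_at_top[of "1::real"]])
    fix b :: real assume "1 \<le> b"
    have "leaf_integrand 2 absolutely_integrable_on {1..b}"
      by (rule absolutely_integrable_on_subinterval[OF ai]) auto
    then show "set_lebesgue_integral lebesgue {1..b} (leaf_integrand 2) = F b"
      unfolding F_def by (rule set_lebesgue_integral_eq_integral(2))
  qed
  show ?thesis using Lim_transform_eventually[OF L1[unfolded L2] E] .
qed


lemma F_cont_all: "continuous_on {1..} F"
proof -
  have "continuous (at y within {1..}) F" if y: "y \<in> {1..}" for y
  proof -
    have "continuous (at y within {1..y+1}) F"
      using F_cont[of "y+1"] y by (simp add: continuous_on_eq_continuous_within)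
    moreover have "at y within {1..} = at y within {1..y+1}"
      by (rule at_within_nhd[of y "{..<y+1}"]) auto
    ultimately show ?thesis by simp
  qed
  then show ?thesis by (simp add: continuous_on_eq_continuous_within)
qed

lemma F_inj: "1 \<le> x \<Longrightarrow> 1 \<le> y \<Longrightarrow> F x = F y \<Longrightarrow> x = y"
proof -
  assume a: "1 \<le> x" "1 \<le> y" "F x = F y"
  show "x = y"
  proof (rule ccontr)
    assume "x \<noteq> y"
    then consider "x < y" | "y < x" by linarith
    then show False
    proof cases
      case 1 then show False using F_mono[OF a(1) 1] a(3) by simp
    next
      case 2 then show False using F_mono[OF a(2) 2] a(3) by simp
    qed
  qed
qed

lemma doubling: assumes "1 \<le> x" "x < cc" shows "F (phi x) = 2 * F x"
proof (cases "x = 1")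
  case True then show ?thesis by (simp add: phi1 F1)
next
  case False
  then have x1: "1 < x" using assms by simp
  define g where "g y = F (phi y) - 2 * F y" for y
  have "g x = g 1"
  proof (rule DERIV_isconst2[OF x1])
    have cM: "continuous_on {1..x} Mf" unfolding Mf_def[abs_def] by (intro continuous_intros)
    have nz: "\<forall>y\<in>{1..x}. Mf y \<noteq> 0"
    proof
      fix y assume "y \<in> {1..x}"
      then have "0 \<le> y" "y < cc" using assms by auto
      then show "Mf y \<noteq> 0" using Mf_pos by force
    qed
    have "continuous_on {1..x} phi" unfolding phi_Mf[abs_def]
      by (rule continuous_on_divide[OF _ cM nz]) (intro continuous_intros)
    moreover have "phi ` {1..x} \<subseteq> {1..}" using phi_ge assms by auto
    ultimately have "continuous_on {1..x} (\<lambda>y. F (phi y))"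
      by (rule continuous_on_compose2[OF F_cont_all])
    moreover have "continuous_on {1..x} F" by (rule F_cont)
    ultimately show "continuous_on {1..x} g" unfolding g_def by (intro continuous_intros)
  next
    fix y assume y: "1 < y" "y < x"
    then have yc: "y < cc" using assms by simp
    have Mp: "Mf y > 0" using Mf_pos y yc by simp
    have d0: "DERIV (\<lambda>y. F (phi y)) y :> leaf_integrand 2 (phi y) * (8 * y * (y ^ 4 + 1) / (Mf y) ^ 2)"
      by (rule DERIV_chain2[OF F_deriv[OF phi_gt[OF y(1) yc]] phi_deriv]) (use Mp in simp)
    have d1: "DERIV (\<lambda>y. F (phi y)) y :> 2 * leaf_integrand 2 y" using d0 unfolding key[OF y(1) yc] .
    have d2: "DERIV (\<lambda>y. 2 * F y) y :> 2 * leaf_integrand 2 y"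
      using DERIV_cmult[OF F_deriv[OF y(1)], of 2] .
    have "DERIV (\<lambda>y. F (phi y) - 2 * F y) y :> 2 * leaf_integrand 2 y - 2 * leaf_integrand 2 y"
      by (rule DERIV_diff[OF d1 d2])
    then show "DERIV g y :> 0" unfolding g_def[abs_def] by simp
  qed (use assms in auto)
  then show ?thesis unfolding g_def by (simp add: phi1 F1)
qed

lemma F_cc: "2 * F cc = eta 2"
proof -
  have L: "((\<lambda>x. F (phi x)) \<longlongrightarrow> eta 2) (at_left cc)"
    using filterlim_compose[OF F_lim phi_lim] .
  have E: "\<forall>\<^sub>F x in at_left cc. F (phi x) = 2 * F x"
  proof (rule eventually_at_leftI[of 1])
    fix y assume "y \<in> {1<..<cc}"
    then show "F (phi y) = 2 * F y" by (intro doubling) auto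
  qed (rule cc_gt1)
  have A: "((\<lambda>x. 2 * F x) \<longlongrightarrow> eta 2) (at_left cc)"
    by (rule Lim_transform_eventually[OF L E])
  have "isCont F cc" using F_deriv[OF cc_gt1] by (rule DERIV_isCont)
  then have "(F \<longlongrightarrow> F cc) (at cc)" unfolding isCont_def .
  then have "(F \<longlongrightarrow> F cc) (at_left cc)" by (rule tendsto_mono[OF at_le[OF subset_UNIV]])
  then have B: "((\<lambda>x. 2 * F x) \<longlongrightarrow> 2 * F cc) (at_left cc)" by (rule tendsto_mult[OF tendsto_const])
  show ?thesis by (rule tendsto_unique[OF _ B A]) simp
qed

end

theorem mainTheorem9:
  fixes l :: real
  assumes "- eta 2 < 2 * l" and "2 * l < eta 2"
  shows "cleafh 2 (2 * l) =
    ((cleafh 2 l) ^ 4 + 2 * (cleafh 2 l) ^ 2 - 1) / (- ((cleafh 2 l) ^ 4) + 2 * (cleafh 2 l) ^ 2 + 1)"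
proof -
  have int: "leaf_integrand 2 integrable_on {1..}"
  proof (rule ccontr)
    assume "\<not> ?thesis"
    then have "eta 2 = 0" unfolding eta_def by (rule not_integrable_integral)
    then show False using assms by simp
  qed
  interpret LI by (rule LI.intro[OF int])
  define a where "a = \<bar>l\<bar>"
  have a0: "0 \<le> a" unfolding a_def by simp
  have a2: "2 * a < eta 2" unfolding a_def using assms by (cases "l \<ge> 0") auto
  then have aF: "a < F cc" using F_cc by simp
  obtain C where C: "1 \<le> C" "C \<le> cc" "F C = a"
    using IVT'[of F 1 a cc] F1 a0 aF cc_gt1 F_cont[of cc] by auto
  have Cc: "C < cc" using C aF by (cases "C = cc") auto
  have e1: "cleafh 2 l = C"
    unfolding cleafh_def
  proof (rule the_equality)
    show "1 \<le> C \<and> integral {1..C} (leaf_integrand 2) = \<bar>l\<bar>" using C unfolding F_def a_def by simp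
  next
    fix r assume "1 \<le> r \<and> integral {1..r} (leaf_integrand 2) = \<bar>l\<bar>"
    then show "r = C" using C F_inj[of r C] unfolding F_def a_def by simp
  qed
  have e2: "cleafh 2 (2 * l) = phi C"
    unfolding cleafh_def
  proof (rule the_equality)
    show "1 \<le> phi C \<and> integral {1..phi C} (leaf_integrand 2) = \<bar>2 * l\<bar>"
      using phi_ge[OF C(1) Cc] doubling[OF C(1) Cc] C unfolding F_def a_def by simp
  next
    fix r assume "1 \<le> r \<and> integral {1..r} (leaf_integrand 2) = \<bar>2 * l\<bar>"
    then show "r = phi C" using phi_ge[OF C(1) Cc] doubling[OF C(1) Cc] C F_inj[of r "phi C"]
      unfolding F_def a_def by simp
  qed
  show ?thesis unfolding e1 e2 phi_def ..
qed

end
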